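(* Let $S$ be a poset and $S\otimes_i G_i$ a terminating ordered join, and let $Z\subseteq S$ be an upper set of $S$. If $G_i\simeq_0\mathbf{0}$ for all $i\in Z$, then $S\otimes_i G_i\simeq_0 (S\setminus Z)\otimes_i G_i$, where $S\setminus Z$ carries the induced order and the right-hand side is the ordered join of the games $G_i$, $i\in S\setminus Z$.
   Context: All games are impartial combinatorial games under normal play; a game is determined by its set of options, and $G \to G'$ means $G'$ is an option of $G$. A game is terminating if it admits no infinite sequence of moves. $\mathbf{0}$ denotes the game with no options. The Grundy number of a terminating game $G$ is the ordinal $\Gamma_0(G)=\operatorname{mex}\{\Gamma_0(G') : G\to G'\}$, where $\operatorname{mex}\Lambda$ is the least ordinal not in the set of ordinals $\Lambda$. Games $G,H$ are $0$-equivalent, $G\simeq_0 H$, if $\Gamma_0(G)=\Gamma_0(H)$. Ordered join: for a poset $S$ and a family $(G_i)_{i\in S}$ of games, $S \otimes_i G_i$ is the game whose options are exactly the ordered joins $S \otimes_i G'_i$ obtained by choosing one $i_0\in S$ and an option $G_{i_0}\to G'_{i_0}$, and setting $G'_i=\mathbf{0}$ for all $i>i_0$ and $G'_i=G_i$ for all other $i\ne i_0$. An upper set $Z\subseteq S$ is a subset such that $i\in Z$ and $i\le j$ imply $j\in Z$. *)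

theory Defs
  imports Main
begin

text \<open>Impartial games are represented as positions in a move graph:
  a position x of type 'p together with a move relation M, where M x y
  means that y is an option of x.  The game is the tree of positions
  reachable from x.\<close>

definition terminating :: "('p \<Rightarrow> 'p \<Rightarrow> bool) \<Rightarrow> 'p \<Rightarrow> bool" where
  "terminating M x \<longleftrightarrow> \<not> (\<exists>f. f 0 = x \<and> (\<forall>n. M (f n) (f (Suc n))))"

definition is_mex :: "'o::wellorder set \<Rightarrow> 'o \<Rightarrow> bool" where
  "is_mex A a \<longleftrightarrow> a \<notin> A \<and> (\<forall>b<a. b \<in> A)"

text \<open>Grundy values
  live in an arbitrary well-ordered type 'o (standing in for the ordinals).\<close>
definition grundy_fun :: "('p \<Rightarrow> 'p \<Rightarrow> bool) \<Rightarrow> ('p \<Rightarrow> 'o::wellorder) \<Rightarrow> bool" where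
  "grundy_fun M Gam \<longleftrightarrow>
     (\<forall>x. terminating M x \<longrightarrow> is_mex (Gam ` {y. M x y}) (Gam x))"

text \<open>The zero game: the unique position of type unit, with no moves.\<close>
definition zero_move :: "unit \<Rightarrow> unit \<Rightarrow> bool" where
  "zero_move x y \<longleftrightarrow> False"

text \<open>Ordered join over the index set T (with the order of type 'i restricted to T).
  A state assigns to every index i the current component game (Some g) or the
  zero game (None).\<close>
definition join_move :: "('a \<Rightarrow> 'a \<Rightarrow> bool) \<Rightarrow> 'i::order set
    \<Rightarrow> ('i \<Rightarrow> 'a option) \<Rightarrow> ('i \<Rightarrow> 'a option) \<Rightarrow> bool" where
  "join_move M T f f' \<longleftrightarrow>
     (\<exists>i0\<in>T. \<exists>g g'. f i0 = Some g \<and> M g g' \<and>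
        f' = (\<lambda>i. if i = i0 then Some g' else if i \<in> T \<and> i0 < i then None else f i))"

definition join_start :: "'i set \<Rightarrow> ('i \<Rightarrow> 'a) \<Rightarrow> ('i \<Rightarrow> 'a option)" where
  "join_start T G = (\<lambda>i. if i \<in> T then Some (G i) else None)"

end

theory Submission
  imports Defs
begin

lemma accp_term:
  assumes "Wellfounded.accp (\<lambda>y x. M x y) x" shows "terminating M x"
  using assms
proof (induct x rule: accp.induct)
  case (accI x)
  show ?case unfolding terminating_def
  proof
    assume "\<exists>f. f 0 = x \<and> (\<forall>n. M (f n) (f (Suc n)))"
    then obtain f where f: "f 0 = x" "\<forall>n. M (f n) (f (Suc n))" by blast
    have "M x (f 1)" using f by (metis One_nat_def)
    then have "terminating M (f 1)" by (rule accI(2))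
    moreover have "\<exists>h. h 0 = f 1 \<and> (\<forall>n. M (h n) (h (Suc n)))"
      using f by (intro exI[of _ "\<lambda>n. f (Suc n)"]) auto
    ultimately show False unfolding terminating_def by blast
  qed
qed

lemma term_accp:
  assumes "terminating M x" shows "Wellfounded.accp (\<lambda>y x. M x y) x"
proof (rule ccontr)
  let ?R = "\<lambda>y x. M x y"
  assume na: "\<not> Wellfounded.accp ?R x"
  define step where "step z = (SOME y. M z y \<and> \<not> Wellfounded.accp ?R y)" for z
  define c where "c n = (step ^^ n) x" for n
  have st: "M z (step z) \<and> \<not> Wellfounded.accp ?R (step z)" if nz: "\<not> Wellfounded.accp ?R z" for z
  proof -
    obtain y where "?R y z" "\<not> Wellfounded.accp ?R y" using not_accp_down[OF nz] by blast
    then have "\<exists>y. M z y \<and> \<not> Wellfounded.accp ?R y" by blast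
    from someI_ex[OF this] show ?thesis unfolding step_def .
  qed
  have cs: "c (Suc n) = step (c n)" for n by (simp add: c_def)
  have nc: "\<not> Wellfounded.accp ?R (c n)" for n
  proof (induction n)
    case 0 then show ?case using na by (simp add: c_def)
  next
    case (Suc n) then show ?case unfolding cs using st by blast
  qed
  have "\<forall>n. M (c n) (c (Suc n))" unfolding cs using st nc by blast
  moreover have "c 0 = x" by (simp add: c_def)
  ultimately show False using assms unfolding terminating_def by blast
qed

lemma accp_tranclp:
  assumes "Wellfounded.accp r a" shows "Wellfounded.accp r\<^sup>+\<^sup>+ a"
  using assms
proof (induct a rule: accp.induct)
  case (accI x)
  show ?case
  proof (rule accp.accI)
    fix y assume "r\<^sup>+\<^sup>+ y x"
    then obtain z where z: "r\<^sup>*\<^sup>* y z" "r z x"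
    proof cases
      case r_into_trancl
      then show ?thesis using that[of y] by blast
    next
      case (trancl_into_trancl b)
      then show ?thesis using that[of b] tranclp_into_rtranclp by metis
    qed
    have "Wellfounded.accp r\<^sup>+\<^sup>+ z" by (rule accI(2)) (rule z(2))
    have d: "y = z \<or> r\<^sup>+\<^sup>+ y z" using rtranclpD[OF z(1)] by blast
    from d show "Wellfounded.accp r\<^sup>+\<^sup>+ y"
    proof
      assume "y = z" then show ?thesis using \<open>Wellfounded.accp r\<^sup>+\<^sup>+ z\<close> by simp
    next
      assume "r\<^sup>+\<^sup>+ y z" then show ?thesis using \<open>Wellfounded.accp r\<^sup>+\<^sup>+ z\<close> accp_downward by metis
    qed
  qed
qed

lemma mex_unique:
  assumes "is_mex A a" "is_mex A b" shows "a = b"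
proof (rule ccontr)
  assume "a \<noteq> b"
  then consider "a < b" | "b < a" by (rule linorder_neqE)
  then show False
  proof cases
    case 1
    with assms(2) have "a \<in> A" unfolding is_mex_def by blast
    with assms(1) show False unfolding is_mex_def by blast
  next
    case 2
    with assms(1) have "b \<in> A" unfolding is_mex_def by blast
    with assms(2) show False unfolding is_mex_def by blast
  qed
qed

lemma jm_intro:
  assumes "i0 \<in> T" "f i0 = Some g" "M g g'"
    "\<And>i. f' i = (if i = i0 then Some g' else if i \<in> T \<and> i0 < i then None else f i)"
  shows "join_move M T f f'"
proof -
  have e: "f' = (\<lambda>i. if i = i0 then Some g' else if i \<in> T \<and> i0 < i then None else f i)"
    by (rule ext) (rule assms(4))
  show ?thesis unfolding join_move_def using assms(1-3) e by blast
qed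

lemma jm_elim:
  assumes "join_move M T f f'"
  obtains i0 g g' where "i0 \<in> T" "f i0 = Some g" "M g g'"
    "f' = (\<lambda>i. if i = i0 then Some g' else if i \<in> T \<and> i0 < i then None else f i)"
  using assms unfolding join_move_def by blast

theorem mainTheorem7:
  fixes S Z :: "'i::order set"
    and M :: "'a \<Rightarrow> 'a \<Rightarrow> bool"
    and G :: "'i \<Rightarrow> 'a"
    and Gc :: "'a \<Rightarrow> 'o::wellorder"
    and Gz :: "unit \<Rightarrow> 'o"
    and GS :: "('i \<Rightarrow> 'a option) \<Rightarrow> 'o"
    and GSZ :: "('i \<Rightarrow> 'a option) \<Rightarrow> 'o"
  assumes upper: "Z \<subseteq> S" "\<forall>i\<in>Z. \<forall>j\<in>S. i \<le> j \<longrightarrow> j \<in> Z"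
    and trm: "terminating (join_move M S) (join_start S G)"
    and gc: "grundy_fun M Gc"
    and gz: "grundy_fun zero_move Gz"
    and gS: "grundy_fun (join_move M S) GS"
    and gSZ: "grundy_fun (join_move M (S - Z)) GSZ"
    and zero: "\<forall>i\<in>Z. Gc (G i) = Gz ()"
  shows "GS (join_start S G) = GSZ (join_start (S - Z) G)"
proof -
  define R where "R = (\<lambda>y x. join_move M S x y)"
  define RZ where "RZ = (\<lambda>y x. join_move M (S - Z) x y)"
  define restr where "restr f = (\<lambda>j. if j \<in> S - Z then f j else None)" for f :: "'i \<Rightarrow> 'a option"
  define P where "P f = (\<forall>i\<in>Z. f i = None \<or> (\<exists>g. f i = Some g \<and> Gc g = Gz ()))" for f :: "'i \<Rightarrow> 'a option"
  have gzmin: "Gz () \<le> b" for b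
  proof -
    have "terminating zero_move ()" unfolding terminating_def zero_move_def by auto
    then have "is_mex (Gz ` {y. zero_move () y}) (Gz ())" using gz unfolding grundy_fun_def by blast
    then show ?thesis unfolding is_mex_def zero_move_def by (metis empty_iff image_empty empty_Collect_eq not_le)
  qed
  have compterm: "terminating M g" if "Wellfounded.accp R f" "i \<in> S" "f i = Some g" for f i g
  proof (rule ccontr)
    assume "\<not> terminating M g"
    then obtain h where h: "h 0 = g" "\<forall>n. M (h n) (h (Suc n))" unfolding terminating_def by blast
    define F where "F n = (if n = 0 then f else (\<lambda>j. if j = i then Some (h n) else if j \<in> S \<and> i < j then None else f j))" for n
    have Fi: "F n i = Some (h n)" for n using h that by (simp add: F_def)
    have "join_move M S (F n) (F (Suc n))" for n
      unfolding join_move_def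
      apply (rule bexI[of _ i])
       apply (rule exI[of _ "h n"], rule exI[of _ "h (Suc n)"])
       apply (intro conjI)
         apply (rule Fi)
        apply (simp add: h)
       apply (rule ext) apply (simp add: F_def)
      using that by auto
    moreover have "F 0 = f" by (simp add: F_def)
    ultimately have "\<not> terminating (join_move M S) f" unfolding terminating_def by blast
    then show False using accp_term[where M="join_move M S" and x="f"] that(1) unfolding R_def by blast
  qed
  have restracc: "Wellfounded.accp RZ (restr f)" if "Wellfounded.accp R f" for f
    using that
  proof (induct f rule: accp.induct)
    case (accI f)
    show ?case
    proof (rule accp.accI)
      fix r' assume "RZ r' (restr f)"
      then obtain i0 g g' where i0: "i0 \<in> S - Z" "restr f i0 = Some g" "M g g'"
        and r': "r' = (\<lambda>i. if i = i0 then Some g' else if i \<in> S - Z \<and> i0 < i then None else restr f i)"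
        unfolding RZ_def by (rule jm_elim)
      define f' where "f' = (\<lambda>i. if i = i0 then Some g' else if i \<in> S \<and> i0 < i then None else f i)"
      have "R f' f" unfolding R_def
        by (rule jm_intro[of i0 _ _ g _ g']) (use i0 in \<open>auto simp: restr_def f'_def split: if_splits\<close>)
      moreover have "r' = restr f'" unfolding r' f'_def restr_def using i0 by (auto simp: fun_eq_iff)
      ultimately show "Wellfounded.accp RZ r'" using accI by auto
    qed
  qed
  have main: "Wellfounded.accp R f \<longrightarrow> P f \<longrightarrow> GS f = GSZ (restr f)" if "Wellfounded.accp R\<^sup>+\<^sup>+ f" for f
    using that
  proof (induct f rule: accp.induct)
    case (accI f)
    show ?case
    proof (intro impI)
      assume af: "Wellfounded.accp R f" and Pf: "P f"
      have IH: "GS y = GSZ (restr y)" if "R\<^sup>+\<^sup>+ y f" "P y" for y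
        using accI that af by (meson accp_downwards tranclp_into_rtranclp)
      have mexS: "is_mex (GS ` {y. join_move M S f y}) (GS f)"
        using gS accp_term[where M="join_move M S" and x="f"] af unfolding grundy_fun_def R_def by blast
      have mexZ: "is_mex (GSZ ` {y. join_move M (S - Z) (restr f) y}) (GSZ (restr f))"
        using gSZ accp_term[where M="join_move M (S - Z)" and x="restr f"] restracc[OF af] unfolding grundy_fun_def RZ_def by blast
      let ?v = "GSZ (restr f)"
      have notin: "?v \<notin> GS ` {y. join_move M S f y}"
      proof
        assume "?v \<in> GS ` {y. join_move M S f y}"
        then obtain f' where mv: "join_move M S f f'" and eq: "GS f' = ?v" by (auto simp: image_iff)
        obtain i0 g g' where i0: "i0 \<in> S" "f i0 = Some g" "M g g'"
          and f': "f' = (\<lambda>i. if i = i0 then Some g' else if i \<in> S \<and> i0 < i then None else f i)"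
          using mv by (rule jm_elim)
        have Rf': "R\<^sup>+\<^sup>+ f' f" by (rule tranclp.r_into_trancl) (simp add: R_def mv)
        show False
        proof (cases "i0 \<in> Z")
          case False
          have Pf': "P f'" using Pf False unfolding P_def f' by auto
          have mvZ: "join_move M (S - Z) (restr f) (restr f')"
            apply (rule jm_intro[of i0 _ _ g _ g'])
            using i0 False by (auto simp: restr_def f')
          have "GSZ (restr f') \<in> GSZ ` {y. join_move M (S - Z) (restr f) y}" by (intro imageI CollectI mvZ)
          then have "GSZ (restr f') \<noteq> ?v" using mexZ unfolding is_mex_def by metis
          then show False using IH[OF Rf' Pf'] eq by simp
        next
          case True
          have tg: "terminating M g" using compterm[OF af i0(1,2)] .
          have "Gc g = Gz ()" using Pf True i0 unfolding P_def by auto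
          moreover have "is_mex (Gc ` {y. M g y}) (Gc g)" using gc tg unfolding grundy_fun_def by blast
          moreover have "Gc g' \<in> Gc ` {y. M g y}" by (intro imageI CollectI i0(3))
          ultimately have "Gc g' \<noteq> Gz ()" unfolding is_mex_def by metis
          then have lt: "Gz () < Gc g'" using gzmin le_neq_trans by metis
          have af': "Wellfounded.accp R f'" using af Rf' by (meson accp_downwards tranclp_into_rtranclp)
          have "f' i0 = Some g'" by (simp add: f')
          then have tg': "terminating M g'" using compterm[OF af' i0(1)] by blast
          have "is_mex (Gc ` {y. M g' y}) (Gc g')" using gc tg' unfolding grundy_fun_def by blast
          then have "Gz () \<in> Gc ` {y. M g' y}" using lt unfolding is_mex_def by blast
          then obtain g'' where g'': "M g' g''" "Gc g'' = Gz ()" by (auto elim!: imageE)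
          define f'' where "f'' = (\<lambda>i. if i = i0 then Some g'' else if i \<in> S \<and> i0 < i then None else f' i)"
          have mv2: "join_move M S f' f''"
            by (rule jm_intro[of i0 _ _ g' _ g'']) (use i0 g'' in \<open>auto simp: f' f''_def\<close>)
          have "R f'' f'" by (simp add: R_def mv2)
          then have Rf'': "R\<^sup>+\<^sup>+ f'' f" using Rf' by (rule tranclp_into_tranclp2)
          have Pf'': "P f''" using Pf g'' unfolding P_def f''_def f' by auto
          have rr: "restr f'' = restr f"
            unfolding restr_def f''_def f' using True upper(2) by (auto simp: fun_eq_iff)
          have "GS f'' = ?v" using IH[OF Rf'' Pf''] rr by simp
          moreover have "is_mex (GS ` {y. join_move M S f' y}) (GS f')"
            using gS accp_term[where M="join_move M S" and x="f'"] af' unfolding grundy_fun_def R_def by blast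
          moreover have "GS f'' \<in> GS ` {y. join_move M S f' y}" by (intro imageI CollectI mv2)
          ultimately show False using eq unfolding is_mex_def by metis
        qed
      qed
      have below: "b \<in> GS ` {y. join_move M S f y}" if "b < ?v" for b
      proof -
        have "b \<in> GSZ ` {y. join_move M (S - Z) (restr f) y}" using mexZ that unfolding is_mex_def by blast
        then obtain r' where mv: "join_move M (S - Z) (restr f) r'" and b: "b = GSZ r'"
          by (auto elim!: imageE)
        obtain i0 g g' where i0: "i0 \<in> S - Z" "restr f i0 = Some g" "M g g'"
          and r': "r' = (\<lambda>i. if i = i0 then Some g' else if i \<in> S - Z \<and> i0 < i then None else restr f i)"
          using mv by (rule jm_elim)
        define f' where "f' = (\<lambda>i. if i = i0 then Some g' else if i \<in> S \<and> i0 < i then None else f i)"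
        have mvf: "join_move M S f f'"
          by (rule jm_intro[of i0 _ _ g _ g']) (use i0 in \<open>auto simp: restr_def f'_def split: if_splits\<close>)
        have rr: "r' = restr f'" unfolding r' f'_def restr_def using i0 by (auto simp: fun_eq_iff)
        have Pf': "P f'" using Pf i0 unfolding P_def f'_def by auto
        have "R\<^sup>+\<^sup>+ f' f" by (rule tranclp.r_into_trancl) (simp add: R_def mvf)
        then have "GS f' = b" using IH[of f'] Pf' rr b by simp
        moreover have "f' \<in> {y. join_move M S f y}" using mvf by simp
        ultimately show ?thesis by (intro image_eqI[where x=f' and f=GS]) simp_all
      qed
      have "is_mex (GS ` {y. join_move M S f y}) ?v" using notin below unfolding is_mex_def by blast
      then show "GS f = ?v" using mexS by (rule mex_unique[symmetric])
    qed
  qed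
  have a0: "Wellfounded.accp R (join_start S G)" unfolding R_def by (rule term_accp[OF trm])
  have P0: "P (join_start S G)" using zero upper(1) unfolding P_def join_start_def by auto
  have r0: "restr (join_start S G) = join_start (S - Z) G" unfolding restr_def join_start_def by (auto simp: fun_eq_iff)
  have "GS (join_start S G) = GSZ (restr (join_start S G))" using main[OF accp_tranclp[OF a0]] a0 P0 by blast
  then show ?thesis unfolding r0 .
qed

end
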